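(* Let $G$ be a finite group and $H\leq G$. If $x\in G$ and $y\in S_x$, then $H_y=H_x$ and consequently $S_y=S_x$. As a result, for any $x,y\in G$ either $S_x=S_y$ or $S_x\cap S_y=\varnothing$.
   Context: For $x\in G$, $H_x=\bigcap_{i\in\mathbb{Z}}x^iHx^{-i}$ (the largest subgroup of $H$ normalized by $x$) and $S_x=H_x\cdot x\subseteq G$. *)

theory Defs
  imports "HOL-Algebra.Algebra"
begin

definition Hx :: "('a, 'b) monoid_scheme \<Rightarrow> 'a set \<Rightarrow> 'a \<Rightarrow> 'a set" where
  "Hx G H x = (\<Inter>i::int. {x [^]\<^bsub>G\<^esub> i \<otimes>\<^bsub>G\<^esub> h \<otimes>\<^bsub>G\<^esub> inv\<^bsub>G\<^esub> (x [^]\<^bsub>G\<^esub> i) | h. h \<in> H})"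

definition Sx :: "('a, 'b) monoid_scheme \<Rightarrow> 'a set \<Rightarrow> 'a \<Rightarrow> 'a set" where
  "Sx G H x = Hx G H x #>\<^bsub>G\<^esub> x"

end

theory Submission
  imports Defs
begin

context group
begin

lemma cl1: "c \<in> carrier G \<Longrightarrow> h \<in> carrier G \<Longrightarrow> inv c \<otimes> (c \<otimes> h) = h"
  by (simp add: m_assoc[symmetric])

lemma cl2: "c \<in> carrier G \<Longrightarrow> h \<in> carrier G \<Longrightarrow> c \<otimes> (inv c \<otimes> h) = h"
  by (simp add: m_assoc[symmetric])

lemma Hx_char:
  assumes H: "subgroup H G" and x: "x \<in> carrier G"
  shows "Hx G H x = {m \<in> carrier G. \<forall>i::int. inv (x [^] i) \<otimes> m \<otimes> x [^] i \<in> H}"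
proof -
  have sub: "\<And>h. h \<in> H \<Longrightarrow> h \<in> carrier G" using subgroup.mem_carrier[OF H] by blast
  have c: "\<And>i::int. x [^] i \<in> carrier G" using x by simp
  have eq: "{x [^] i \<otimes> h \<otimes> inv (x [^] i) | h. h \<in> H}
            = {m \<in> carrier G. inv (x [^] i) \<otimes> m \<otimes> x [^] i \<in> H}" for i :: int
  proof (rule Set.set_eqI, rule iffI)
    fix m assume "m \<in> {x [^] i \<otimes> h \<otimes> inv (x [^] i) | h. h \<in> H}"
    then obtain h where h: "h \<in> H" "m = x [^] i \<otimes> h \<otimes> inv (x [^] i)" by blast
    have hc: "h \<in> carrier G" using sub h by blast
    have e: "inv (x [^] i) \<otimes> m \<otimes> x [^] i = h"
      unfolding h(2) using c[of i] hc by (simp add: m_assoc cl1 cl2)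
    have mc: "m \<in> carrier G" unfolding h(2) using c[of i] hc by simp
    show "m \<in> {m \<in> carrier G. inv (x [^] i) \<otimes> m \<otimes> x [^] i \<in> H}"
      using mc e h(1) by simp
  next
    fix m assume "m \<in> {m \<in> carrier G. inv (x [^] i) \<otimes> m \<otimes> x [^] i \<in> H}"
    then have m: "m \<in> carrier G" "inv (x [^] i) \<otimes> m \<otimes> x [^] i \<in> H" by auto
    have "x [^] i \<otimes> (inv (x [^] i) \<otimes> m \<otimes> x [^] i) \<otimes> inv (x [^] i) = m"
      using c[of i] m by (simp add: m_assoc cl1 cl2)
    then have "m = x [^] i \<otimes> (inv (x [^] i) \<otimes> m \<otimes> x [^] i) \<otimes> inv (x [^] i)
        \<and> inv (x [^] i) \<otimes> m \<otimes> x [^] i \<in> H" using m(2) by simp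
    then show "m \<in> {x [^] i \<otimes> h \<otimes> inv (x [^] i) | h. h \<in> H}"
      by blast
  qed
  show ?thesis unfolding Hx_def eq by auto
qed

lemma Hx_subgroup:
  assumes H: "subgroup H G" and x: "x \<in> carrier G"
  shows "subgroup (Hx G H x) G"
proof (rule subgroupI)
  show "Hx G H x \<subseteq> carrier G" using Hx_char[OF H x] by auto
  show "Hx G H x \<noteq> {}"
  proof -
    have "\<one> \<in> Hx G H x" using Hx_char[OF H x] x subgroup.one_closed[OF H] by simp
    then show ?thesis by blast
  qed
next
  fix a assume a: "a \<in> Hx G H x"
  show "inv a \<in> Hx G H x"
  proof -
    have ac: "a \<in> carrier G" using a Hx_char[OF H x] by auto
    { fix i :: int
      have c: "x [^] i \<in> carrier G" using x by simp
      have "inv (x [^] i) \<otimes> a \<otimes> x [^] i \<in> H" using a Hx_char[OF H x] by auto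
      then have "inv (inv (x [^] i) \<otimes> a \<otimes> x [^] i) \<in> H" using subgroup.m_inv_closed[OF H] by blast
      also have "inv (inv (x [^] i) \<otimes> a \<otimes> x [^] i) = inv (x [^] i) \<otimes> inv a \<otimes> x [^] i"
        using c ac by (simp add: inv_mult_group m_assoc cl1 cl2)
      finally have "inv (x [^] i) \<otimes> inv a \<otimes> x [^] i \<in> H" . }
    then show ?thesis using Hx_char[OF H x] ac by auto
  qed
next
  fix a b assume a: "a \<in> Hx G H x" and b: "b \<in> Hx G H x"
  have ac: "a \<in> carrier G" using a Hx_char[OF H x] by auto
  have bc: "b \<in> carrier G" using b Hx_char[OF H x] by auto
  { fix i :: int
    have c: "x [^] i \<in> carrier G" using x by simp
    have "inv (x [^] i) \<otimes> a \<otimes> x [^] i \<in> H" "inv (x [^] i) \<otimes> b \<otimes> x [^] i \<in> H"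
      using a b Hx_char[OF H x] by auto
    then have "(inv (x [^] i) \<otimes> a \<otimes> x [^] i) \<otimes> (inv (x [^] i) \<otimes> b \<otimes> x [^] i) \<in> H"
      using subgroup.m_closed[OF H] by blast
    also have "(inv (x [^] i) \<otimes> a \<otimes> x [^] i) \<otimes> (inv (x [^] i) \<otimes> b \<otimes> x [^] i)
        = inv (x [^] i) \<otimes> (a \<otimes> b) \<otimes> x [^] i"
      using c ac bc by (simp add: m_assoc cl1 cl2)
    finally have "inv (x [^] i) \<otimes> (a \<otimes> b) \<otimes> x [^] i \<in> H" . }
  then show "a \<otimes> b \<in> Hx G H x" using Hx_char[OF H x] ac bc by auto
qed

definition normset :: "'a set \<Rightarrow> 'a set" where
  "normset K = {c \<in> carrier G. \<forall>m \<in> carrier G. (inv c \<otimes> m \<otimes> c \<in> K \<longleftrightarrow> m \<in> K)}"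

lemma normset_subgroup:
  assumes K: "K \<subseteq> carrier G"
  shows "subgroup (normset K) G"
proof (rule subgroupI)
  show "normset K \<subseteq> carrier G" unfolding normset_def by auto
  show "normset K \<noteq> {}"
  proof -
    have "\<one> \<in> normset K" unfolding normset_def by simp
    then show ?thesis by blast
  qed
next
  fix a assume a: "a \<in> normset K"
  have ac: "a \<in> carrier G" using a unfolding normset_def by auto
  show "inv a \<in> normset K" unfolding normset_def
  proof (intro CollectI conjI ballI)
    show "inv a \<in> carrier G" using ac by simp
    fix m assume m: "m \<in> carrier G"
    have mc: "a \<otimes> m \<otimes> inv a \<in> carrier G" using ac m by simp
    have "(inv a \<otimes> (a \<otimes> m \<otimes> inv a) \<otimes> a \<in> K) = (a \<otimes> m \<otimes> inv a \<in> K)"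
      using a mc unfolding normset_def by auto
    moreover have "inv a \<otimes> (a \<otimes> m \<otimes> inv a) \<otimes> a = m"
      using ac m by (simp add: m_assoc cl1 cl2)
    moreover have "inv (inv a) \<otimes> m \<otimes> inv a = a \<otimes> m \<otimes> inv a" using ac by simp
    ultimately show "(inv (inv a) \<otimes> m \<otimes> inv a \<in> K) = (m \<in> K)" by simp
  qed
next
  fix a b assume a: "a \<in> normset K" and b: "b \<in> normset K"
  have ac: "a \<in> carrier G" using a unfolding normset_def by auto
  have bc: "b \<in> carrier G" using b unfolding normset_def by auto
  show "a \<otimes> b \<in> normset K" unfolding normset_def
  proof (intro CollectI conjI ballI)
    show "a \<otimes> b \<in> carrier G" using ac bc by simp
    fix m assume m: "m \<in> carrier G"
    have mc: "inv a \<otimes> m \<otimes> a \<in> carrier G" using ac m by simp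
    have "inv (a \<otimes> b) \<otimes> m \<otimes> (a \<otimes> b) = inv b \<otimes> (inv a \<otimes> m \<otimes> a) \<otimes> b"
      using ac bc m by (simp add: inv_mult_group m_assoc cl1 cl2)
    moreover have "(inv b \<otimes> (inv a \<otimes> m \<otimes> a) \<otimes> b \<in> K) = (inv a \<otimes> m \<otimes> a \<in> K)"
      using b mc unfolding normset_def by auto
    moreover have "(inv a \<otimes> m \<otimes> a \<in> K) = (m \<in> K)" using a m unfolding normset_def by auto
    ultimately show "(inv (a \<otimes> b) \<otimes> m \<otimes> (a \<otimes> b) \<in> K) = (m \<in> K)" by simp
  qed
qed

lemma x_in_normset:
  assumes H: "subgroup H G" and x: "x \<in> carrier G"
  shows "x \<in> normset (Hx G H x)"
  unfolding normset_def
proof (intro CollectI conjI ballI x)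
  fix m assume m: "m \<in> carrier G"
  have mc: "inv x \<otimes> m \<otimes> x \<in> carrier G" using x m by simp
  have shift: "\<And>i::int. inv (x [^] i) \<otimes> (inv x \<otimes> m \<otimes> x) \<otimes> x [^] i
       = inv (x [^] (1+i)) \<otimes> m \<otimes> x [^] (1+i)"
    using x m by (simp add: int_pow_mult inv_mult_group m_assoc cl1 cl2)
  have "(\<forall>i::int. inv (x [^] (1+i)) \<otimes> m \<otimes> x [^] (1+i) \<in> H)
      = (\<forall>i::int. inv (x [^] i) \<otimes> m \<otimes> x [^] i \<in> H)"
  proof
    assume a: "\<forall>i::int. inv (x [^] (1+i)) \<otimes> m \<otimes> x [^] (1+i) \<in> H"
    show "\<forall>i::int. inv (x [^] i) \<otimes> m \<otimes> x [^] i \<in> H"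
    proof
      fix j :: int
      have "inv (x [^] (1+(j-1))) \<otimes> m \<otimes> x [^] (1+(j-1)) \<in> H" using a by blast
      then show "inv (x [^] j) \<otimes> m \<otimes> x [^] j \<in> H" by simp
    qed
  next
    assume a: "\<forall>i::int. inv (x [^] i) \<otimes> m \<otimes> x [^] i \<in> H"
    show "\<forall>i::int. inv (x [^] (1+i)) \<otimes> m \<otimes> x [^] (1+i) \<in> H"
      using a by blast
  qed
  then show "(inv x \<otimes> m \<otimes> x \<in> Hx G H x) = (m \<in> Hx G H x)"
    using Hx_char[OF H x] m mc shift by simp
qed

lemma Hx_mono_step:
  assumes H: "subgroup H G" and x: "x \<in> carrier G" and k: "k \<in> Hx G H x"
  shows "Hx G H x \<subseteq> Hx G H (k \<otimes> x)"
proof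
  let ?K = "Hx G H x"
  have Ksub: "subgroup ?K G" using Hx_subgroup[OF H x] .
  have KC: "?K \<subseteq> carrier G" using subgroup.subset[OF Ksub] .
  have kc: "k \<in> carrier G" using k KC by auto
  have NS: "subgroup (normset ?K) G" using normset_subgroup[OF KC] .
  have kN: "k \<in> normset ?K" unfolding normset_def
  proof (intro CollectI conjI ballI kc)
    fix m assume m: "m \<in> carrier G"
    show "(inv k \<otimes> m \<otimes> k \<in> ?K) = (m \<in> ?K)"
    proof
      assume "inv k \<otimes> m \<otimes> k \<in> ?K"
      then have "k \<otimes> (inv k \<otimes> m \<otimes> k) \<otimes> inv k \<in> ?K"
        using k subgroup.m_closed[OF Ksub] subgroup.m_inv_closed[OF Ksub] by blast
      moreover have "k \<otimes> (inv k \<otimes> m \<otimes> k) \<otimes> inv k = m" using kc m by (simp add: m_assoc cl1 cl2)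
      ultimately show "m \<in> ?K" by simp
    next
      assume "m \<in> ?K"
      then show "inv k \<otimes> m \<otimes> k \<in> ?K"
        using k subgroup.m_closed[OF Ksub] subgroup.m_inv_closed[OF Ksub] by blast
    qed
  qed
  have yN: "k \<otimes> x \<in> normset ?K"
    using subgroup.m_closed[OF NS kN x_in_normset[OF H x]] .
  have yc: "k \<otimes> x \<in> carrier G" using kc x by simp
  have KH: "?K \<subseteq> H"
  proof
    fix m assume "m \<in> ?K"
    then have "inv (x [^] (0::int)) \<otimes> m \<otimes> x [^] (0::int) \<in> H" using Hx_char[OF H x] by blast
    then show "m \<in> H" using \<open>m \<in> ?K\<close> KC x by auto
  qed
  fix m assume m: "m \<in> ?K"
  have mc: "m \<in> carrier G" using m KC by auto
  { fix i :: int
    have "(k \<otimes> x) [^] i \<in> normset ?K" using subgroup_int_pow_closed[OF NS yN] .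
    then have "inv ((k \<otimes> x) [^] i) \<otimes> m \<otimes> (k \<otimes> x) [^] i \<in> ?K"
      using m mc unfolding normset_def by auto
    then have "inv ((k \<otimes> x) [^] i) \<otimes> m \<otimes> (k \<otimes> x) [^] i \<in> H" using KH by auto }
  then have "\<forall>i::int. inv ((k \<otimes> x) [^] i) \<otimes> m \<otimes> (k \<otimes> x) [^] i \<in> H" by blast
  then show "m \<in> Hx G H (k \<otimes> x)" unfolding Hx_char[OF H yc] using mc by blast
qed

lemma Sx_elem:
  assumes H: "subgroup H G" and x: "x \<in> carrier G" and y: "y \<in> Sx G H x"
  shows "Hx G H y = Hx G H x \<and> Sx G H y = Sx G H x"
proof -
  let ?K = "Hx G H x"
  have Ksub: "subgroup ?K G" using Hx_subgroup[OF H x] .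
  have KC: "?K \<subseteq> carrier G" using subgroup.subset[OF Ksub] .
  obtain k where k: "k \<in> ?K" and yk: "y = k \<otimes> x"
    using y unfolding Sx_def r_coset_def by blast
  have kc: "k \<in> carrier G" using k KC by auto
  have yc: "y \<in> carrier G" using kc x yk by simp
  have s1: "?K \<subseteq> Hx G H y" using Hx_mono_step[OF H x k] yk by simp
  have ik: "inv k \<in> Hx G H y" using s1 subgroup.m_inv_closed[OF Ksub k] by blast
  have "inv k \<otimes> y = x" using yk kc x by (simp add: m_assoc cl1 cl2)
  then have s2: "Hx G H y \<subseteq> ?K" using Hx_mono_step[OF H yc ik] by simp
  have eq: "Hx G H y = ?K" using s1 s2 by blast
  have "Sx G H y = ?K #> y" unfolding Sx_def eq ..
  also have "\<dots> = ?K #> (k \<otimes> x)" using yk by simp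
  also have "\<dots> = (?K #> k) #> x" using coset_mult_assoc[OF KC kc x] by simp
  also have "\<dots> = ?K #> x" using subgroup.rcos_const[OF Ksub is_group k] by simp
  finally show ?thesis using eq unfolding Sx_def by simp
qed

end

theorem lemma4p2:
  fixes G :: "('a, 'b) monoid_scheme" and H :: "'a set"
  assumes "group G" and "finite (carrier G)" and "subgroup H G"
  shows "(\<forall>x \<in> carrier G. \<forall>y \<in> Sx G H x. Hx G H y = Hx G H x \<and> Sx G H y = Sx G H x)
       \<and> (\<forall>x \<in> carrier G. \<forall>y \<in> carrier G. Sx G H x = Sx G H y \<or> Sx G H x \<inter> Sx G H y = {})"
proof -
  have A: "\<forall>x \<in> carrier G. \<forall>y \<in> Sx G H x. Hx G H y = Hx G H x \<and> Sx G H y = Sx G H x"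
    using group.Sx_elem[OF assms(1) assms(3)] by blast
  have B: "\<forall>x \<in> carrier G. \<forall>y \<in> carrier G. Sx G H x = Sx G H y \<or> Sx G H x \<inter> Sx G H y = {}"
  proof (intro ballI)
    fix x y assume x: "x \<in> carrier G" and y: "y \<in> carrier G"
    show "Sx G H x = Sx G H y \<or> Sx G H x \<inter> Sx G H y = {}"
    proof (cases "Sx G H x \<inter> Sx G H y = {}")
      case False
      then obtain z where z: "z \<in> Sx G H x" "z \<in> Sx G H y" by blast
      have "Sx G H z = Sx G H x" using A x z(1) by blast
      moreover have "Sx G H z = Sx G H y" using A y z(2) by blast
      ultimately show ?thesis by simp
    qed simp
  qed
  show ?thesis using A B by blast
qed

end
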